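(* Let $(x,y)$ be a $\delta$-feasible assignment, let $\mathcal{F}$ be an acyclic $y$-flow from $S$ to $T$ (with respect to $(x,y)$), and let $(x',y')$ be the result of chain shifting $(x,y)$ according to $\mathcal{F}$. Let $d$ be the largest value of $\mathrm{dist}_G(u,w)$ over arcs $(u,w)$ of $G_{\mathcal{F}}$. Then $(x',y')$ is $(\delta+d)$-feasible; every vertex $v$ of indegree zero in $G_{\mathcal{F}}$ satisfies $\mathrm{radius}_{(x',y')}(v)\le\mathrm{radius}_{(x,y)}(v)$; every other vertex $v$ satisfies $\mathrm{radius}_{(x',y')}(v)\le\max\big(\mathrm{radius}_{(x,y)}(v),\ \max_{a\in N^{in}_{G_\mathcal{F}}(v)}(\mathrm{radius}_{(x,y)}(a)+\mathrm{dist}_G(a,v))\big)$; and $y'_v=y_v$ for every $v\in V\setminus(S\cup T)$.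
   Context: $G=(V,E)$ undirected unweighted, $\mathrm{dist}_G$ shortest-path distance, $L:V\to\mathbb{N}$, $k$ a positive integer. An assignment is $x:V\times V\to\mathbb{R}_{\ge0}$, $y:V\to\mathbb{R}_{\ge0}$; it is $\delta$-feasible if (1) $\sum_u y_u=k$; (2) $x_{u,v}\le y_u$; (3) $\sum_v x_{u,v}\le L(u)y_u$; (4) $\sum_u x_{u,v}=1$; (5) $0\le y_u\le1$; (6) $x_{u,v}=0$ whenever $\mathrm{dist}_G(u,v)>\delta$; (7) $x_{u,v}\ge0$. $\mathrm{radius}_{(x,y)}(u)$ is the largest integer $i$ such that some $v$ has $\mathrm{dist}_G(v,u)=i$ and $x_{u,v}>0$ ($0$ if none). $y$-flow: for an assignment $(x,y)$ and disjoint $S,T\subseteq V$, a $y$-flow from $S$ to $T$ is a finite collection $\mathcal{F}$ of paths $(\alpha,v_1,\dots,v_t)$ with $\alpha>0$ real, $v_1\in S$, $v_t\in T$, $L(v_1)\le L(v_t)$, and for $2\le i\le t-1$: $v_i\notin S\cup T$, $y_{v_i}=1$, $L(v_i)\ge L(v_1)$ (such a path transfers $\alpha$ from $v_1$ to $v_t$ through $v_2,\dots,v_{t-1}$), such that: for each $v\in S$ the total amount transferred from $v$ is at most $y_v$; for each $v\in T$ the total transferred to $v$ is at most $1-y_v$; for each $v\notin S\cup T$ the total transferred through $v$ is at most $1$. $G_{\mathcal{F}}=(V,A)$ is the directed graph with arc $(u,w)$ iff some path of $\mathcal{F}$ contains $u,w$ as consecutive vertices in this order; $\mathcal{F}$ is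 acyclic iff $G_{\mathcal{F}}$ is acyclic. $f_{\mathcal{F}}(u,w)$ is the sum of $\alpha$ over paths containing $u,w$ consecutively; $fl_{\mathcal{F}}(u,w)$ is the sum of $L(v_1)\alpha$ over such paths $(\alpha,v_1,\dots)$. $N^{in}_{G_\mathcal{F}}(v)=\{u:(u,v)\in A\}$. Chain shifting of $(x,y)$ according to acyclic $\mathcal{F}$: set $\Delta_{u,v}=0$ for all $u,v$; for each arc $(u,a)\in A$ in reverse topological order of $G_\mathcal{F}$ and each $v\in V$, let $\Delta=x_{u,v}\,fl_\mathcal{F}(u,a)/(L(u)y_u)$ and set $\Delta_{a,v}\mathrel{+}=\Delta$, $\Delta_{u,v}\mathrel{-}=\Delta$; then set $x_{u,v}\mathrel{+}=\Delta_{u,v}$ for all $u,v$; for each $s\in S$ decrease $y_s$ by $\sum_{(s,u)\in A}f_\mathcal{F}(s,u)$; for each $t\in T$ increase $y_t$ by $\sum_{(u,t)\in A}f_\mathcal{F}(u,t)$. *)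

theory Defs
  imports Main "HOL-Library.Extended_Nat"
begin

text \<open>The graph G has vertex set UNIV of a finite type 'a and a symmetric edge
relation E. Distances are extended naturals (infinity if unreachable).\<close>

definition gdist :: "('a \<Rightarrow> 'a \<Rightarrow> bool) \<Rightarrow> 'a \<Rightarrow> 'a \<Rightarrow> enat" where
  "gdist E u v = Inf {enat n | n. (u, v) \<in> {(a, b). E a b} ^^ n}"

definition feasible ::
  "('a::finite \<Rightarrow> 'a \<Rightarrow> bool) \<Rightarrow> ('a \<Rightarrow> nat) \<Rightarrow> nat \<Rightarrow> enat
   \<Rightarrow> ('a \<Rightarrow> 'a \<Rightarrow> real) \<Rightarrow> ('a \<Rightarrow> real) \<Rightarrow> bool" where
  "feasible E L k \<delta> x y \<longleftrightarrow>
     (\<Sum>u\<in>UNIV. y u) = real k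
   \<and> (\<forall>u v. x u v \<le> y u)
   \<and> (\<forall>u. (\<Sum>v\<in>UNIV. x u v) \<le> real (L u) * y u)
   \<and> (\<forall>v. (\<Sum>u\<in>UNIV. x u v) = 1)
   \<and> (\<forall>u. 0 \<le> y u \<and> y u \<le> 1)
   \<and> (\<forall>u v. gdist E u v > \<delta> \<longrightarrow> x u v = 0)
   \<and> (\<forall>u v. 0 \<le> x u v)"

definition radius ::
  "('a::finite \<Rightarrow> 'a \<Rightarrow> bool) \<Rightarrow> ('a \<Rightarrow> 'a \<Rightarrow> real) \<Rightarrow> 'a \<Rightarrow> nat" where
  "radius E x u = Max ({0} \<union> {i. \<exists>v. gdist E v u = enat i \<and> x u v > 0})"

text \<open>A flow is a finite collection (list, so multiplicities are allowed) of paths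
  (alpha, [v_1, ..., v_t]).\<close>
type_synonym 'a flow = "(real \<times> 'a list) list"

definition valid_path ::
  "('a \<Rightarrow> nat) \<Rightarrow> ('a \<Rightarrow> real) \<Rightarrow> 'a set \<Rightarrow> 'a set \<Rightarrow> real \<times> 'a list \<Rightarrow> bool" where
  "valid_path L y S T p \<longleftrightarrow> (case p of (\<alpha>, vs) \<Rightarrow>
      \<alpha> > 0 \<and> vs \<noteq> [] \<and> hd vs \<in> S \<and> last vs \<in> T \<and> L (hd vs) \<le> L (last vs)
    \<and> (\<forall>i. 1 \<le> i \<and> i + 1 < length vs \<longrightarrow>
          vs ! i \<notin> S \<union> T \<and> y (vs ! i) = 1 \<and> L (vs ! i) \<ge> L (hd vs)))"

definition y_flow ::
  "('a \<Rightarrow> nat) \<Rightarrow> ('a \<Rightarrow> real) \<Rightarrow> 'a set \<Rightarrow> 'a set \<Rightarrow> 'a flow \<Rightarrow> bool" where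
  "y_flow L y S T F \<longleftrightarrow>
     (\<forall>p\<in>set F. valid_path L y S T p)
   \<and> (\<forall>v\<in>S. sum_list (map (\<lambda>(\<alpha>, vs). if hd vs = v then \<alpha> else 0) F) \<le> y v)
   \<and> (\<forall>v\<in>T. sum_list (map (\<lambda>(\<alpha>, vs). if last vs = v then \<alpha> else 0) F) \<le> 1 - y v)
   \<and> (\<forall>v. v \<notin> S \<union> T \<longrightarrow>
        sum_list (map (\<lambda>(\<alpha>, vs). \<alpha> * real (count_list vs v)) F) \<le> 1)"

definition consec :: "'a list \<Rightarrow> 'a \<Rightarrow> 'a \<Rightarrow> bool" where
  "consec vs u w \<longleftrightarrow> (\<exists>i. Suc i < length vs \<and> vs ! i = u \<and> vs ! Suc i = w)"

definition arc :: "'a flow \<Rightarrow> 'a \<Rightarrow> 'a \<Rightarrow> bool" where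
  "arc F u w \<longleftrightarrow> (\<exists>(\<alpha>, vs)\<in>set F. consec vs u w)"

definition flow_acyclic :: "'a flow \<Rightarrow> bool" where
  "flow_acyclic F \<longleftrightarrow> acyclic {(u, w). arc F u w}"

definition fF :: "'a flow \<Rightarrow> 'a \<Rightarrow> 'a \<Rightarrow> real" where
  "fF F u w = sum_list (map (\<lambda>(\<alpha>, vs). if consec vs u w then \<alpha> else 0) F)"

definition flF :: "('a \<Rightarrow> nat) \<Rightarrow> 'a flow \<Rightarrow> 'a \<Rightarrow> 'a \<Rightarrow> real" where
  "flF L F u w = sum_list (map (\<lambda>(\<alpha>, vs). if consec vs u w then real (L (hd vs)) * \<alpha> else 0) F)"

text \<open>In the procedure, each arc (u,a) is processed once and the
  increment Delta = x_{u,v} fl(u,a) / (L(u) y_u) uses the original x, so the final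
  accumulated Delta is the following closed form (independent of the processing order).\<close>
definition shift_x ::
  "('a::finite \<Rightarrow> nat) \<Rightarrow> 'a flow \<Rightarrow> ('a \<Rightarrow> 'a \<Rightarrow> real) \<Rightarrow> ('a \<Rightarrow> real) \<Rightarrow> 'a \<Rightarrow> 'a \<Rightarrow> real" where
  "shift_x L F x y w v =
     x w v
     + (\<Sum>u\<in>{u. arc F u w}. x u v * flF L F u w / (real (L u) * y u))
     - (\<Sum>a\<in>{a. arc F w a}. x w v * flF L F w a / (real (L w) * y w))"

definition shift_y ::
  "'a::finite set \<Rightarrow> 'a set \<Rightarrow> 'a flow \<Rightarrow> ('a \<Rightarrow> real) \<Rightarrow> 'a \<Rightarrow> real" where
  "shift_y S T F y v =
     (if v \<in> S then y v - (\<Sum>u\<in>{u. arc F v u}. fF F v u)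
      else if v \<in> T then y v + (\<Sum>u\<in>{u. arc F u v}. fF F u v)
      else y v)"

end

theory Submission imports Defs begin

lemma gdist_le: "(u,v) \<in> {(a,b). E a b}^^n \<Longrightarrow> gdist E u v \<le> enat n"
  unfolding gdist_def by (rule Inf_lower) auto

lemma gdist_fin: assumes "gdist E u v = enat n" shows "(u,v) \<in> {(a,b). E a b}^^n"
proof -
  let ?A = "{enat n | n. (u, v) \<in> {(a, b). E a b} ^^ n}"
  have ne: "?A \<noteq> {}" proof
    assume "?A = {}" then have "gdist E u v = \<infinity>" unfolding gdist_def by (simp add: Inf_enat_def)
    then show False using assms by simp
  qed
  have "Inf ?A = (LEAST x. x \<in> ?A)" using ne by (auto simp: Inf_enat_def)
  moreover have "(LEAST x. x \<in> ?A) \<in> ?A" using ne by (metis (no_types, lifting) LeastI ex_in_conv)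
  ultimately have "Inf ?A \<in> ?A" by simp
  then show ?thesis using assms unfolding gdist_def by auto
qed

lemma relpow_sym: assumes "symp E" shows "(u,v) \<in> {(a,b). E a b}^^n \<Longrightarrow> (v,u) \<in> {(a,b). E a b}^^n"
proof (induction n arbitrary: v)
  case 0 then show ?case by simp
next
  case (Suc n)
  then obtain w where "(u,w) \<in> {(a,b). E a b}^^n" "E w v" by auto
  then have "(v,w) \<in> {(a,b). E a b}" "(w,u) \<in> {(a,b). E a b}^^n" using Suc.IH assms by (auto dest: sympD)
  then show ?case by (rule relpow_Suc_I2)
qed

lemma gdist_sym: assumes "symp E" shows "gdist E u v = gdist E v u"
proof -
  have "{enat n |n. (u, v) \<in> {(a, b). E a b} ^^ n} = {enat n |n. (v, u) \<in> {(a, b). E a b} ^^ n}"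
    using relpow_sym[OF assms] by blast
  then show ?thesis unfolding gdist_def by simp
qed

lemma gdist_tri: "gdist E u v \<le> gdist E u w + gdist E w v"
proof (cases "gdist E u w = \<infinity> \<or> gdist E w v = \<infinity>")
  case True then show ?thesis by auto
next
  case False
  then obtain m n where m: "gdist E u w = enat m" and n: "gdist E w v = enat n" by auto
  have "(u,v) \<in> {(a,b). E a b}^^(m+n)"
    using gdist_fin[OF m] gdist_fin[OF n] by (auto simp: relpow_add)
  then show ?thesis using m n gdist_le by fastforce
qed

lemma swap_gen: "finite A \<Longrightarrow> (\<Sum>a\<in>A. sum_list (map (f a) xs)) = sum_list (map (\<lambda>p. \<Sum>a\<in>A. f a p) xs)"
  by (induction xs) (auto simp: sum.distrib)

lemma sum_list_map_cong': "(\<And>p. p \<in> set xs \<Longrightarrow> f p = g p) \<Longrightarrow> sum_list (map f xs) = sum_list (map g xs)"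
  by (metis map_eq_conv)

context
  fixes L :: "'a::finite \<Rightarrow> nat" and y :: "'a \<Rightarrow> real" and S T :: "'a set" and F :: "'a flow"
  assumes ST: "S \<inter> T = {}" and yf: "y_flow L y S T F" and acyc: "flow_acyclic F"
begin

lemma vp: "(\<alpha>,vs) \<in> set F \<Longrightarrow> valid_path L y S T (\<alpha>,vs)"
  using yf unfolding y_flow_def by auto

lemma alpha_pos: "(\<alpha>,vs) \<in> set F \<Longrightarrow> \<alpha> > 0"
  using vp unfolding valid_path_def by auto

lemma consec_trancl:
  assumes p: "(\<alpha>,vs) \<in> set F" shows "i < j \<Longrightarrow> j < length vs \<Longrightarrow> (vs!i, vs!j) \<in> {(u,w). arc F u w}^+"
proof (induction j)
  case 0 then show ?case by simp
next
  case (Suc j)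
  have a: "arc F (vs!j) (vs!Suc j)" unfolding arc_def consec_def using p Suc.prems by blast
  show ?case
  proof (cases "i = j")
    case True then show ?thesis using a by auto
  next
    case False
    then have "(vs!i, vs!j) \<in> {(u,w). arc F u w}^+" using Suc by auto
    then show ?thesis using a by (simp add: trancl_into_trancl)
  qed
qed

lemma dist: assumes p: "(\<alpha>,vs) \<in> set F" shows "distinct vs"
proof (rule ccontr)
  assume "\<not> distinct vs"
  then obtain i j where ij: "i < j" "j < length vs" "vs!i = vs!j"
    by (metis distinct_conv_nth linorder_neqE_nat)
  then have "(vs!i, vs!i) \<in> {(u,w). arc F u w}^+" using consec_trancl[OF p] by metis
  then show False using acyc unfolding flow_acyclic_def acyclic_def by blast
qed

lemma vp': assumes p: "(\<alpha>,vs) \<in> set F"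
  shows "vs \<noteq> [] \<and> hd vs \<in> S \<and> last vs \<in> T \<and> L (hd vs) \<le> L (last vs)
    \<and> (\<forall>i. 1 \<le> i \<and> i + 1 < length vs \<longrightarrow>
          vs ! i \<notin> S \<union> T \<and> y (vs ! i) = 1 \<and> L (vs ! i) \<ge> L (hd vs))"
  using vp[OF p] unfolding valid_path_def by auto

lemma len2: assumes p: "(\<alpha>,vs) \<in> set F" shows "2 \<le> length vs" "hd vs \<noteq> last vs"
proof -
  show "hd vs \<noteq> last vs" using vp'[OF p] ST by auto
  then show "2 \<le> length vs" using vp'[OF p]
    by (cases vs; cases "tl vs") auto
qed

lemma pos_cases: assumes p: "(\<alpha>,vs) \<in> set F" and i: "i < length vs"
  shows "(i = 0 \<and> vs!i \<in> S) \<or> (i = length vs - 1 \<and> vs!i \<in> T) \<or>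
     (0 < i \<and> i + 1 < length vs \<and> vs!i \<notin> S \<union> T \<and> y (vs!i) = 1 \<and> L (hd vs) \<le> L (vs!i))"
proof -
  have ne: "vs \<noteq> []" using vp'[OF p] by auto
  show ?thesis
  proof (cases "i = 0")
    case True then show ?thesis using vp'[OF p] ne by (simp add: hd_conv_nth)
  next
    case False
    show ?thesis
    proof (cases "i = length vs - 1")
      case True then show ?thesis using vp'[OF p] ne by (simp add: last_conv_nth)
    next
      case False2: False
      then have "1 \<le> i \<and> i + 1 < length vs" using False i by auto
      then show ?thesis using vp'[OF p] False by auto
    qed
  qed
qed

lemma consec_L: assumes p: "(\<alpha>,vs) \<in> set F" and c: "consec vs u w"
  shows "L (hd vs) \<le> L u" "L (hd vs) \<le> L w"
proof -
  obtain j where j: "Suc j < length vs" "vs!j = u" "vs!Suc j = w" using c unfolding consec_def by auto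
  have ne: "vs \<noteq> []" using vp'[OF p] by auto
  show "L (hd vs) \<le> L u" using pos_cases[OF p, of j] j ne by (auto simp: hd_conv_nth)
  show "L (hd vs) \<le> L w" using pos_cases[OF p, of "Suc j"] j ne vp'[OF p]
    by (auto simp: last_conv_nth)
qed

lemma consec_pos: assumes p: "(\<alpha>,vs) \<in> set F" and c: "consec vs u w"
  shows "w \<notin> S" "u \<notin> T" "w \<notin> S \<union> T \<Longrightarrow> y w = 1" "u \<notin> S \<union> T \<Longrightarrow> y u = 1"
proof -
  obtain j where j: "Suc j < length vs" "vs!j = u" "vs!Suc j = w" using c unfolding consec_def by auto
  show "w \<notin> S" using pos_cases[OF p, of "Suc j"] j ST by auto
  show "u \<notin> T" using pos_cases[OF p, of "j"] j ST by auto
  show "w \<notin> S \<union> T \<Longrightarrow> y w = 1" using pos_cases[OF p, of "Suc j"] j by auto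
  show "u \<notin> S \<union> T \<Longrightarrow> y u = 1" using pos_cases[OF p, of "j"] j by auto
qed

lemma arc_pos: assumes "arc F u w"
  shows "w \<notin> S" "u \<notin> T" "w \<notin> S \<union> T \<Longrightarrow> y w = 1" "u \<notin> S \<union> T \<Longrightarrow> y u = 1"
  using assms consec_pos unfolding arc_def by fast+

lemma card_out: assumes p: "(\<alpha>,vs) \<in> set F"
  shows "card {a. consec vs w a} = (if w \<in> set vs \<and> w \<noteq> last vs then 1 else 0)"
proof (cases "w \<in> set vs")
  case True
  then obtain i where i: "i < length vs" "vs!i = w" by (auto simp: in_set_conv_nth)
  have d: "distinct vs" using dist[OF p] .
  have ne: "vs \<noteq> []" using i by auto
  have eq: "{a. consec vs w a} = (if Suc i < length vs then {vs!Suc i} else {})"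
    unfolding consec_def using i d by (auto simp: nth_eq_iff_index_eq)
  have "w \<noteq> last vs \<longleftrightarrow> Suc i < length vs"
    using i d ne by (auto simp: last_conv_nth nth_eq_iff_index_eq)
  then show ?thesis using eq True by auto
next
  case False
  then have "{a. consec vs w a} = {}" unfolding consec_def in_set_conv_nth using Suc_lessD by blast
  then show ?thesis using False by simp
qed

lemma card_in: assumes p: "(\<alpha>,vs) \<in> set F"
  shows "card {u. consec vs u w} = (if w \<in> set vs \<and> w \<noteq> hd vs then 1 else 0)"
proof (cases "w \<in> set vs")
  case True
  then obtain i where i: "i < length vs" "vs!i = w" by (auto simp: in_set_conv_nth)
  have d: "distinct vs" using dist[OF p] .
  have ne: "vs \<noteq> []" using i by auto
  have eq: "{u. consec vs u w} = (if 0 < i then {vs!(i - 1)} else {})"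
    unfolding consec_def using i d
    apply (auto simp: nth_eq_iff_index_eq)
    by (metis Suc_lessD Suc_pred)
  have "w \<noteq> hd vs \<longleftrightarrow> 0 < i"
    using i d ne by (auto simp: hd_conv_nth nth_eq_iff_index_eq)
  then show ?thesis using eq True by auto
next
  case False
  then have "{u. consec vs u w} = {}" unfolding consec_def by (auto simp: in_set_conv_nth)
  then show ?thesis using False by simp
qed


lemma sum_out_gen:
  fixes g :: "real \<Rightarrow> 'a list \<Rightarrow> real"
  shows   "(\<Sum>a\<in>{a. arc F w a}. sum_list (map (\<lambda>(\<alpha>,vs). if consec vs w a then g \<alpha> vs else 0) F))
   = sum_list (map (\<lambda>(\<alpha>,vs). g \<alpha> vs * card {a. consec vs w a}) F)"
proof -
  have "(\<Sum>a\<in>{a. arc F w a}. sum_list (map (\<lambda>(\<alpha>,vs). if consec vs w a then g \<alpha> vs else 0) F))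
     = sum_list (map (\<lambda>p. \<Sum>a\<in>{a. arc F w a}. (case p of (\<alpha>,vs) \<Rightarrow> if consec vs w a then g \<alpha> vs else 0)) F)"
    by (rule swap_gen) simp
  also have "\<dots> = sum_list (map (\<lambda>(\<alpha>,vs). g \<alpha> vs * card {a. consec vs w a}) F)"
  proof (rule sum_list_map_cong')
    fix p assume p: "p \<in> set F"
    obtain \<alpha> vs where pp: "p = (\<alpha>,vs)" by fastforce
    have "{a \<in> {a. arc F w a}. consec vs w a} = {a. consec vs w a}"
      using p pp unfolding arc_def by auto
    then have "(\<Sum>a\<in>{a. arc F w a}. if consec vs w a then g \<alpha> vs else 0) = g \<alpha> vs * card {a. consec vs w a}"
      using sum.inter_filter[of "{a. arc F w a}" "\<lambda>_. g \<alpha> vs" "consec vs w", symmetric] by simp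
    then show "(\<Sum>a\<in>{a. arc F w a}. (case p of (\<alpha>,vs) \<Rightarrow> if consec vs w a then g \<alpha> vs else 0))
       = (case p of (\<alpha>,vs) \<Rightarrow> g \<alpha> vs * card {a. consec vs w a})" using pp by simp
  qed
  finally show ?thesis .
qed

lemma sum_in_gen:
  fixes g :: "real \<Rightarrow> 'a list \<Rightarrow> real"
  shows   "(\<Sum>u\<in>{u. arc F u w}. sum_list (map (\<lambda>(\<alpha>,vs). if consec vs u w then g \<alpha> vs else 0) F))
   = sum_list (map (\<lambda>(\<alpha>,vs). g \<alpha> vs * card {u. consec vs u w}) F)"
proof -
  have "(\<Sum>u\<in>{u. arc F u w}. sum_list (map (\<lambda>(\<alpha>,vs). if consec vs u w then g \<alpha> vs else 0) F))
     = sum_list (map (\<lambda>p. \<Sum>u\<in>{u. arc F u w}. (case p of (\<alpha>,vs) \<Rightarrow> if consec vs u w then g \<alpha> vs else 0)) F)"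
    by (rule swap_gen) simp
  also have "\<dots> = sum_list (map (\<lambda>(\<alpha>,vs). g \<alpha> vs * card {u. consec vs u w}) F)"
  proof (rule sum_list_map_cong')
    fix p assume p: "p \<in> set F"
    obtain \<alpha> vs where pp: "p = (\<alpha>,vs)" by fastforce
    have "{u \<in> {u. arc F u w}. consec vs u w} = {u. consec vs u w}"
      using p pp unfolding arc_def by auto
    then have "(\<Sum>u\<in>{u. arc F u w}. if consec vs u w then g \<alpha> vs else 0) = g \<alpha> vs * card {u. consec vs u w}"
      using sum.inter_filter[of "{u. arc F u w}" "\<lambda>_. g \<alpha> vs" "\<lambda>u. consec vs u w", symmetric] by simp
    then show "(\<Sum>u\<in>{u. arc F u w}. (case p of (\<alpha>,vs) \<Rightarrow> if consec vs u w then g \<alpha> vs else 0))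
       = (case p of (\<alpha>,vs) \<Rightarrow> g \<alpha> vs * card {u. consec vs u w})" using pp by simp
  qed
  finally show ?thesis .
qed

lemma out_fF: "(\<Sum>a\<in>{a. arc F w a}. fF F w a) = sum_list (map (\<lambda>(\<alpha>,vs). \<alpha> * card {a. consec vs w a}) F)"
  unfolding fF_def using sum_out_gen[of w "\<lambda>\<alpha> vs. \<alpha>"] by simp

lemma in_fF: "(\<Sum>u\<in>{u. arc F u w}. fF F u w) = sum_list (map (\<lambda>(\<alpha>,vs). \<alpha> * card {u. consec vs u w}) F)"
  unfolding fF_def using sum_in_gen[of w "\<lambda>\<alpha> vs. \<alpha>"] by simp

lemma out_flF: "(\<Sum>a\<in>{a. arc F w a}. flF L F w a) = sum_list (map (\<lambda>(\<alpha>,vs). real (L (hd vs)) * \<alpha> * card {a. consec vs w a}) F)"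
  unfolding flF_def using sum_out_gen[of w "\<lambda>\<alpha> vs. real (L (hd vs)) * \<alpha>"] by simp

lemma in_flF: "(\<Sum>u\<in>{u. arc F u w}. flF L F u w) = sum_list (map (\<lambda>(\<alpha>,vs). real (L (hd vs)) * \<alpha> * card {u. consec vs u w}) F)"
  unfolding flF_def using sum_in_gen[of w "\<lambda>\<alpha> vs. real (L (hd vs)) * \<alpha>"] by simp

lemma inS: assumes "w \<in> S" "w \<in> set vs" and p: "(\<alpha>,vs) \<in> set F" shows "w = hd vs"
proof -
  obtain i where i: "i < length vs" "vs!i = w" using assms by (auto simp: in_set_conv_nth)
  then have "i = 0" using pos_cases[OF p i(1)] ST assms by auto
  then show ?thesis using i by (auto simp: hd_conv_nth)
qed

lemma inT: assumes "w \<in> T" "w \<in> set vs" and p: "(\<alpha>,vs) \<in> set F" shows "w = last vs"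
proof -
  obtain i where i: "i < length vs" "vs!i = w" using assms by (auto simp: in_set_conv_nth)
  then have "i = length vs - 1" using pos_cases[OF p i(1)] ST assms by auto
  moreover have "vs \<noteq> []" using i by auto
  ultimately show ?thesis using i by (simp add: last_conv_nth)
qed

lemma outS: assumes "w \<in> S"
  shows "(\<Sum>a\<in>{a. arc F w a}. fF F w a) = sum_list (map (\<lambda>(\<alpha>, vs). if hd vs = w then \<alpha> else 0) F)"
  unfolding out_fF
proof (rule sum_list_map_cong')
  fix p assume p: "p \<in> set F"
  obtain \<alpha> vs where pp: "p = (\<alpha>,vs)" by fastforce
  have "(w \<in> set vs \<and> w \<noteq> last vs) \<longleftrightarrow> hd vs = w"
    using inS[OF assms _ p[unfolded pp]] len2[OF p[unfolded pp]] vp'[OF p[unfolded pp]] by auto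
  then show "(case p of (\<alpha>, vs) \<Rightarrow> \<alpha> * real (card {a. consec vs w a})) =
         (case p of (\<alpha>, vs) \<Rightarrow> if hd vs = w then \<alpha> else 0)"
    using card_out[OF p[unfolded pp], of w] pp by auto
qed

lemma outlS: assumes "w \<in> S"
  shows "(\<Sum>a\<in>{a. arc F w a}. flF L F w a) = real (L w) * sum_list (map (\<lambda>(\<alpha>, vs). if hd vs = w then \<alpha> else 0) F)"
  unfolding out_flF sum_list_const_mult[symmetric]
proof (rule sum_list_map_cong')
  fix p assume p: "p \<in> set F"
  obtain \<alpha> vs where pp: "p = (\<alpha>,vs)" by fastforce
  have "(w \<in> set vs \<and> w \<noteq> last vs) \<longleftrightarrow> hd vs = w"
    using inS[OF assms _ p[unfolded pp]] len2[OF p[unfolded pp]] vp'[OF p[unfolded pp]] by auto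
  then show "(case p of (\<alpha>, vs) \<Rightarrow> real (L (hd vs)) * \<alpha> * real (card {a. consec vs w a})) =
         real (L w) * (case p of (\<alpha>, vs) \<Rightarrow> if hd vs = w then \<alpha> else 0)"
    using card_out[OF p[unfolded pp], of w] pp by auto
qed

lemma inT_eq: assumes "w \<in> T"
  shows "(\<Sum>u\<in>{u. arc F u w}. fF F u w) = sum_list (map (\<lambda>(\<alpha>, vs). if last vs = w then \<alpha> else 0) F)"
  unfolding in_fF
proof (rule sum_list_map_cong')
  fix p assume p: "p \<in> set F"
  obtain \<alpha> vs where pp: "p = (\<alpha>,vs)" by fastforce
  have "(w \<in> set vs \<and> w \<noteq> hd vs) \<longleftrightarrow> last vs = w"
    using inT[OF assms _ p[unfolded pp]] len2[OF p[unfolded pp]] vp'[OF p[unfolded pp]] by auto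
  then show "(case p of (\<alpha>, vs) \<Rightarrow> \<alpha> * real (card {u. consec vs u w})) =
         (case p of (\<alpha>, vs) \<Rightarrow> if last vs = w then \<alpha> else 0)"
    using card_in[OF p[unfolded pp], of w] pp by auto
qed

lemma in_le_out: assumes "w \<notin> S \<union> T"
  shows "(\<Sum>u\<in>{u. arc F u w}. flF L F u w) \<le> (\<Sum>a\<in>{a. arc F w a}. flF L F w a)"
  unfolding in_flF out_flF
proof (rule sum_list_mono)
  fix p assume p: "p \<in> set F"
  obtain \<alpha> vs where pp: "p = (\<alpha>,vs)" by fastforce
  have "w \<noteq> hd vs" "w \<noteq> last vs" using vp'[OF p[unfolded pp]] assms by auto
  then show "(case p of (\<alpha>, vs) \<Rightarrow> real (L (hd vs)) * \<alpha> * real (card {u. consec vs u w})) \<le>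
         (case p of (\<alpha>, vs) \<Rightarrow> real (L (hd vs)) * \<alpha> * real (card {a. consec vs w a}))"
    using card_in[OF p[unfolded pp], of w] card_out[OF p[unfolded pp], of w] pp by auto
qed

lemma outc_le1: assumes "w \<notin> S \<union> T"
  shows "(\<Sum>a\<in>{a. arc F w a}. fF F w a) \<le> 1"
proof -
  have "(\<Sum>a\<in>{a. arc F w a}. fF F w a) \<le> sum_list (map (\<lambda>(\<alpha>, vs). \<alpha> * real (count_list vs w)) F)"
    unfolding out_fF
  proof (rule sum_list_mono)
    fix p assume p: "p \<in> set F"
    obtain \<alpha> vs where pp: "p = (\<alpha>,vs)" by fastforce
    have "w \<in> set vs \<Longrightarrow> 1 \<le> count_list vs w" using count_list_0_iff[of vs w] by auto
    then show "(case p of (\<alpha>, vs) \<Rightarrow> \<alpha> * real (card {a. consec vs w a})) \<le>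
         (case p of (\<alpha>, vs) \<Rightarrow> \<alpha> * real (count_list vs w))"
      using card_out[OF p[unfolded pp], of w] pp alpha_pos[OF p[unfolded pp]] by auto
  qed
  also have "\<dots> \<le> 1" using yf assms unfolding y_flow_def by auto
  finally show ?thesis .
qed

lemma fF_nonneg: "0 \<le> fF F u w"
  unfolding fF_def by (rule sum_list_nonneg) (auto dest: alpha_pos)

lemma flF_nonneg: "0 \<le> flF L F u w"
  unfolding flF_def by (rule sum_list_nonneg) (auto dest: alpha_pos)

lemma flF_le: "flF L F u w \<le> real (L u) * fF F u w" "flF L F u w \<le> real (L w) * fF F u w"
  unfolding flF_def fF_def sum_list_const_mult[symmetric]
  subgoal by (rule sum_list_mono) (auto intro!: mult_right_mono, use consec_L(1) in blast, use alpha_pos in fastforce)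
  subgoal by (rule sum_list_mono) (auto intro!: mult_right_mono, use consec_L(2) in blast, use alpha_pos in fastforce)
  done

lemma sumS: "(\<Sum>w\<in>S. sum_list (map (\<lambda>(\<alpha>, vs). if hd vs = w then \<alpha> else 0) F)) = sum_list (map fst F)"
  apply (subst swap_gen, simp)
  apply (rule sum_list_map_cong')
  using vp' by (auto simp: sum.delta')

lemma sumT: "(\<Sum>w\<in>T. sum_list (map (\<lambda>(\<alpha>, vs). if last vs = w then \<alpha> else 0) F)) = sum_list (map fst F)"
  apply (subst swap_gen, simp)
  apply (rule sum_list_map_cong')
  using vp' by (auto simp: sum.delta')

end


theorem mainTheorem12:
  fixes E :: "'a::finite \<Rightarrow> 'a \<Rightarrow> bool"
    and L :: "'a \<Rightarrow> nat" and k :: nat and \<delta> :: nat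
    and x :: "'a \<Rightarrow> 'a \<Rightarrow> real" and y :: "'a \<Rightarrow> real"
    and S T :: "'a set" and F :: "'a flow"
  assumes "symp E"
    and "k > 0"
    and "feasible E L k (enat \<delta>) x y"
    and "S \<inter> T = {}"
    and "y_flow L y S T F"
    and "flow_acyclic F"
  defines "x' \<equiv> shift_x L F x y"
    and "y' \<equiv> shift_y S T F y"
    and "d \<equiv> Sup {gdist E u w | u w. arc F u w}"
  shows "feasible E L k (enat \<delta> + d) x' y'
    \<and> (\<forall>v. (\<nexists>u. arc F u v) \<longrightarrow> radius E x' v \<le> radius E x v)
    \<and> (\<forall>v. (\<exists>u. arc F u v) \<longrightarrow>
           enat (radius E x' v) \<le> max (enat (radius E x v))
             (Sup {enat (radius E x a) + gdist E a v | a. arc F a v}))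
    \<and> (\<forall>v. v \<notin> S \<union> T \<longrightarrow> y' v = y v)"
proof -
  note ST = assms(4) and yf = assms(5) and ac = assms(6)
  have fe1: "(\<Sum>u\<in>UNIV. y u) = real k" and fe2: "\<And>u v. x u v \<le> y u"
    and fe3: "\<And>u. (\<Sum>v\<in>UNIV. x u v) \<le> real (L u) * y u"
    and fe4: "\<And>v. (\<Sum>u\<in>UNIV. x u v) = 1"
    and y0: "\<And>u. 0 \<le> y u" and y1: "\<And>u. y u \<le> 1"
    and fe6: "\<And>u v. gdist E u v > enat \<delta> \<Longrightarrow> x u v = 0"
    and x0: "\<And>u v. 0 \<le> x u v"
    using assms(3) unfolding feasible_def by auto
  define outl where "outl w = (\<Sum>a\<in>{a. arc F w a}. flF L F w a)" for w
  define inl where "inl w = (\<Sum>u\<in>{u. arc F u w}. flF L F u w)" for w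
  define c where "c u w = flF L F u w / (real (L u) * y u)" for u w
  define q where "q w = outl w / (real (L w) * y w)" for w
  define IN where "IN w v = (\<Sum>u\<in>{u. arc F u w}. x u v * flF L F u w / (real (L u) * y u))" for w v
  define OUT where "OUT w v = (\<Sum>a\<in>{a. arc F w a}. x w v * flF L F w a / (real (L w) * y w))" for w v
  have x'raw: "x' w v = x w v + IN w v - OUT w v" for w v
    unfolding x'_def shift_x_def IN_def OUT_def by simp
  have OUTq: "OUT w v = x w v * q w" for w v
    unfolding OUT_def q_def outl_def
    by (simp add: sum_divide_distrib[symmetric] sum_distrib_left[symmetric])
  have INc: "IN w v = (\<Sum>u\<in>{u. arc F u w}. x u v * c u w)" for w v
    unfolding IN_def c_def by simp
  have x'eq: "x' w v = x w v * (1 - q w) + (\<Sum>u\<in>{u. arc F u w}. x u v * c u w)" for w v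
    unfolding x'raw OUTq INc by (simp add: algebra_simps)
  have outc_le: "(\<Sum>a\<in>{a. arc F w a}. fF F w a) \<le> y w" for w
  proof (cases "w \<in> S")
    case True
    then show ?thesis using outS[OF ST yf ac True] yf unfolding y_flow_def by auto
  next
    case nS: False
    show ?thesis
    proof (cases "{a. arc F w a} = {}")
      case True then show ?thesis using y0 by simp
    next
      case False
      then obtain a where a: "arc F w a" by auto
      then have wT: "w \<notin> T" using arc_pos[OF ST yf ac] by blast
      then have "y w = 1" using arc_pos(4)[OF ST yf ac a] nS by blast
      then show ?thesis using outc_le1[OF ST yf ac, of w] nS wT by auto
    qed
  qed
  have outl_le: "outl w \<le> real (L w) * y w" for w
  proof -
    have "outl w \<le> (\<Sum>a\<in>{a. arc F w a}. real (L w) * fF F w a)"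
      unfolding outl_def by (rule sum_mono) (rule flF_le(1)[OF ST yf ac])
    also have "\<dots> = real (L w) * (\<Sum>a\<in>{a. arc F w a}. fF F w a)" by (simp add: sum_distrib_left)
    also have "\<dots> \<le> real (L w) * y w" by (rule mult_left_mono[OF outc_le]) simp
    finally show ?thesis .
  qed
  have outl0: "0 \<le> outl w" for w
    unfolding outl_def by (rule sum_nonneg) (rule flF_nonneg[OF ST yf ac])
  have Ly0: "0 \<le> real (L w) * y w" for w using y0 by simp
  have outl_z: "real (L w) * y w = 0 \<Longrightarrow> outl w = 0" for w using outl_le[of w] outl0[of w] by (metis order_antisym)
  have q0: "0 \<le> q w" for w unfolding q_def using outl0 Ly0 by simp
  have q1: "q w \<le> 1" for w
  proof (cases "real (L w) * y w = 0")
    case True then show ?thesis by (simp add: q_def True)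
  next
    case False then have "real (L w) * y w > 0" using Ly0[of w] by linarith
    then show ?thesis unfolding q_def using outl_le[of w] by simp
  qed
  have qmul: "q w * (real (L w) * y w) = outl w" for w
    using outl_z[of w] unfolding q_def by (cases "real (L w) * y w = 0") auto
  have c0: "0 \<le> c u w" for u w unfolding c_def using flF_nonneg[OF ST yf ac] Ly0 by simp
  have cq: "c u w \<le> q u" if "arc F u w" for u w
  proof -
    have "flF L F u w \<le> outl u" unfolding outl_def
      by (rule member_le_sum) (use that flF_nonneg[OF ST yf ac] in auto)
    then show ?thesis unfolding c_def q_def by (rule divide_right_mono) (rule Ly0)
  qed
  have c1: "arc F u w \<Longrightarrow> c u w \<le> 1" for u w using cq q1 order_trans by blast
  have x'0: "0 \<le> x' w v" for w v
    unfolding x'eq using x0 q1 c0 by (auto intro!: add_nonneg_nonneg sum_nonneg mult_nonneg_nonneg)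
  have noin: "(\<nexists>u. arc F u w) \<Longrightarrow> x' w v = x w v * (1 - q w)" for w v
    unfolding x'eq by simp
  have x'nz: "x' w v \<noteq> 0 \<Longrightarrow> x w v \<noteq> 0 \<or> (\<exists>u. arc F u w \<and> x u v \<noteq> 0)" for w v
  proof (rule ccontr)
    assume "x' w v \<noteq> 0" "\<not> (x w v \<noteq> 0 \<or> (\<exists>u. arc F u w \<and> x u v \<noteq> 0))"
    then show False unfolding x'eq by simp
  qed
  have notT: "w \<in> S \<Longrightarrow> w \<notin> T" for w using ST by auto
  have y'S: "w \<in> S \<Longrightarrow> y' w = y w - sum_list (map (\<lambda>(\<alpha>, vs). if hd vs = w then \<alpha> else 0) F)" for w
    unfolding y'_def shift_y_def using outS[OF ST yf ac] by simp
  have y'T: "w \<in> T \<Longrightarrow> y' w = y w + (\<Sum>u\<in>{u. arc F u w}. fF F u w)" for w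
    unfolding y'_def shift_y_def using ST by auto
  have y'N: "w \<notin> S \<union> T \<Longrightarrow> y' w = y w" for w
    unfolding y'_def shift_y_def by simp
  have outSle: "w \<in> S \<Longrightarrow> sum_list (map (\<lambda>(\<alpha>, vs). if hd vs = w then \<alpha> else 0) F) \<le> y w" for w
    using yf unfolding y_flow_def by auto
  have outS0: "0 \<le> sum_list (map (\<lambda>(\<alpha>, vs). if hd vs = w then \<alpha> else 0) F)" for w
    by (rule sum_list_nonneg) (auto dest: alpha_pos[OF ST yf ac])
  have noinS: "w \<in> S \<Longrightarrow> \<not> arc F u w" for u w using arc_pos(1)[OF ST yf ac] by blast
  have nooutT: "w \<in> T \<Longrightarrow> \<not> arc F w a" for a w using arc_pos(2)[OF ST yf ac] by blast
  have inc0: "0 \<le> (\<Sum>u\<in>{u. arc F u w}. fF F u w)" for w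
    by (rule sum_nonneg) (rule fF_nonneg[OF ST yf ac])
  have irr: "\<not> arc F w w" for w
    using ac unfolding flow_acyclic_def acyclic_def by blast

  have P1: "(\<Sum>u\<in>UNIV. y' u) = real k"
  proof -
    define Oo where "Oo w = sum_list (map (\<lambda>(\<alpha>, vs). if hd vs = w then \<alpha> else 0) F)" for w
    define Ii where "Ii w = (\<Sum>u\<in>{u. arc F u w}. fF F u w)" for w
    have "y' w = y w - (if w \<in> S then Oo w else 0) + (if w \<in> T then Ii w else 0)" for w
      using y'S[of w] y'T[of w] y'N[of w] notT[of w] unfolding Oo_def Ii_def by auto
    then have "(\<Sum>u\<in>UNIV. y' u) = (\<Sum>u\<in>UNIV. y u) - (\<Sum>u\<in>UNIV. if u \<in> S then Oo u else 0) + (\<Sum>u\<in>UNIV. if u \<in> T then Ii u else 0)"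
      by (simp add: sum.distrib sum_subtractf)
    also have "(\<Sum>u\<in>UNIV. if u \<in> S then Oo u else 0) = sum Oo S"
      using sum.inter_filter[of UNIV Oo "\<lambda>u. u \<in> S"] by simp
    also have "(\<Sum>u\<in>UNIV. if u \<in> T then Ii u else 0) = sum Ii T"
      using sum.inter_filter[of UNIV Ii "\<lambda>u. u \<in> T"] by simp
    also have "sum Oo S = sum_list (map fst F)" unfolding Oo_def by (rule sumS[OF ST yf ac])
    also have "sum Ii T = sum_list (map fst F)" unfolding Ii_def
      using sumT[OF ST yf ac] inT_eq[OF ST yf ac] by simp
    finally show ?thesis using fe1 by simp
  qed

  have P2: "x' w v \<le> y' w" for w v
  proof (cases "w \<in> S")
    case True
    let ?o = "sum_list (map (\<lambda>(\<alpha>, vs). if hd vs = w then \<alpha> else 0) F)"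
    have x'w: "x' w v = x w v * (1 - q w)" using noin noinS[OF True] by blast
    have ol: "outl w = real (L w) * ?o" unfolding outl_def using outlS[OF ST yf ac True] .
    show ?thesis
    proof (cases "real (L w) * y w = 0")
      case z: True
      show ?thesis
      proof (cases "L w = 0")
        case True
        have "(\<Sum>v\<in>UNIV. x w v) \<le> 0" using fe3[of w] True by simp
        then have "x w v \<le> 0" using member_le_sum[of v UNIV "x w"] x0 by force
        then show ?thesis using x'w y'S[OF \<open>w\<in>S\<close>] outSle[OF \<open>w\<in>S\<close>] x0[of w v] q1[of w] by simp
      next
        case False
        then have "y w = 0" using z by simp
        then have "?o = 0" using outSle[OF \<open>w\<in>S\<close>] outS0[of w] by simp
        then show ?thesis using x'w y'S[OF \<open>w\<in>S\<close>] fe2[of w v] q0[of w] x0[of w v]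
          by (smt (verit) mult_left_le)
      qed
    next
      case False
      then have pos: "real (L w) * y w > 0" using Ly0[of w] by linarith
      then have Lp: "L w > 0" and yp: "y w > 0" using y0[of w] by (auto simp: zero_less_mult_iff)
      have qe: "q w = ?o / y w" unfolding q_def ol using Lp by simp
      have "x w v * (1 - ?o / y w) \<le> y w * (1 - ?o / y w)"
        by (rule mult_right_mono[OF fe2]) (use outSle[OF True] yp in simp)
      also have "\<dots> = y w - ?o" using yp by (simp add: algebra_simps)
      finally show ?thesis using x'w y'S[OF True] qe by simp
    qed
  next
    case nS: False
    show ?thesis
    proof (cases "w \<in> T")
      case True
      have x'w: "x' w v = x w v + (\<Sum>u\<in>{u. arc F u w}. x u v * c u w)"
      proof -
        have e: "{a. arc F w a} = {}" using nooutT[OF True] by auto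
        show ?thesis unfolding x'eq q_def outl_def e by simp
      qed
      have "x u v * c u w \<le> fF F u w" for u
      proof (cases "real (L u) * y u = 0")
        case True then show ?thesis by (simp add: c_def True fF_nonneg[OF ST yf ac])
      next
        case False
        then have pos: "real (L u) * y u > 0" using Ly0[of u] by linarith
        then have Lp: "real (L u) > 0" and yp: "y u > 0" using y0[of u] by (auto simp: zero_less_mult_iff)
        have "x u v * c u w \<le> y u * c u w" by (rule mult_right_mono[OF fe2 c0])
        also have "\<dots> = flF L F u w / real (L u)" unfolding c_def using yp by simp
        also have "\<dots> \<le> fF F u w" using flF_le(1)[OF ST yf ac, of u w] Lp by (simp add: divide_le_eq mult.commute)
        finally show ?thesis .
      qed
      then have "(\<Sum>u\<in>{u. arc F u w}. x u v * c u w) \<le> (\<Sum>u\<in>{u. arc F u w}. fF F u w)"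
        by (rule sum_mono)
      then show ?thesis using x'w y'T[OF True] fe2[of w v] by simp
    next
      case nT: False
      then have nST: "w \<notin> S \<union> T" using nS by simp
      show ?thesis
      proof (cases "\<exists>u. arc F u w")
        case False
        then show ?thesis using noin[OF False] y'N[OF nST] fe2[of w v] x0[of w v] q0[of w]
          by (smt (verit) mult_left_le)
      next
        case True
        then obtain u0 where "arc F u0 w" by blast
        then have yw: "y w = 1" using arc_pos(3)[OF ST yf ac] nST by blast
        have "x' w v \<le> x w v + (\<Sum>u\<in>{u. arc F u w}. x u v)"
        proof -
          have "x w v * (1 - q w) \<le> x w v" using x0[of w v] q0[of w] by (simp add: mult_left_le)
          moreover have "(\<Sum>u\<in>{u. arc F u w}. x u v * c u w) \<le> (\<Sum>u\<in>{u. arc F u w}. x u v)"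
            by (rule sum_mono) (use x0 c1 in \<open>auto intro: mult_left_le\<close>)
          ultimately show ?thesis unfolding x'eq by simp
        qed
        also have "\<dots> = (\<Sum>u\<in>insert w {u. arc F u w}. x u v)" using irr[of w] by simp
        also have "\<dots> \<le> (\<Sum>u\<in>UNIV. x u v)" by (rule sum_mono2) (use x0 in auto)
        also have "\<dots> = 1" by (rule fe4)
        finally show ?thesis using y'N[OF nST] yw by simp
      qed
    qed
  qed

  have P3: "(\<Sum>v\<in>UNIV. x' w v) \<le> real (L w) * y' w" for w
  proof -
    have "(\<Sum>v\<in>UNIV. x' w v) = (1 - q w) * (\<Sum>v\<in>UNIV. x w v) + (\<Sum>u\<in>{u. arc F u w}. c u w * (\<Sum>v\<in>UNIV. x u v))"
    proof -
      have "(\<Sum>v\<in>UNIV. x' w v) = (\<Sum>v\<in>UNIV. x w v * (1 - q w)) + (\<Sum>v\<in>UNIV. \<Sum>u\<in>{u. arc F u w}. x u v * c u w)"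
        unfolding x'eq by (rule sum.distrib)
      also have "(\<Sum>v\<in>UNIV. x w v * (1 - q w)) = (1 - q w) * (\<Sum>v\<in>UNIV. x w v)"
        by (simp add: sum_distrib_left mult.commute)
      also have "(\<Sum>v\<in>UNIV. \<Sum>u\<in>{u. arc F u w}. x u v * c u w) = (\<Sum>u\<in>{u. arc F u w}. c u w * (\<Sum>v\<in>UNIV. x u v))"
        by (subst sum.swap) (simp add: sum_distrib_left mult.commute)
      finally show ?thesis .
    qed
    also have "\<dots> \<le> (1 - q w) * (real (L w) * y w) + inl w"
    proof (rule add_mono)
      show "(1 - q w) * (\<Sum>v\<in>UNIV. x w v) \<le> (1 - q w) * (real (L w) * y w)"
        by (rule mult_left_mono[OF fe3]) (use q1[of w] in simp)
      show "(\<Sum>u\<in>{u. arc F u w}. c u w * (\<Sum>v\<in>UNIV. x u v)) \<le> inl w"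
        unfolding inl_def
      proof (rule sum_mono)
        fix u
        show "c u w * (\<Sum>v\<in>UNIV. x u v) \<le> flF L F u w"
        proof (cases "real (L u) * y u = 0")
          case True then show ?thesis by (simp add: c_def True flF_nonneg[OF ST yf ac])
        next
          case False
          then have pos: "real (L u) * y u > 0" using Ly0[of u] by linarith
          have "c u w * (\<Sum>v\<in>UNIV. x u v) \<le> c u w * (real (L u) * y u)"
            by (rule mult_left_mono[OF fe3 c0])
          also have "\<dots> = flF L F u w" using pos y0[of u] by (simp add: c_def zero_less_mult_iff)
          finally show ?thesis .
        qed
      qed
    qed
    also have "(1 - q w) * (real (L w) * y w) = real (L w) * y w - outl w"
      using qmul[of w] by (simp add: algebra_simps)
    finally have main: "(\<Sum>v\<in>UNIV. x' w v) \<le> real (L w) * y w - outl w + inl w" by simp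
    show ?thesis
    proof (cases "w \<in> S")
      case True
      have "inl w = 0" unfolding inl_def using noinS[OF True] by simp
      moreover have "outl w = real (L w) * sum_list (map (\<lambda>(\<alpha>, vs). if hd vs = w then \<alpha> else 0) F)"
        unfolding outl_def using outlS[OF ST yf ac True] .
      ultimately have "real (L w) * y' w = real (L w) * y w - outl w + inl w" by (subst y'S[OF True]) (simp add: right_diff_distrib)
      then show ?thesis using main by linarith
    next
      case nS: False
      show ?thesis
      proof (cases "w \<in> T")
        case True
        have e: "{a. arc F w a} = {}" using nooutT[OF True] by auto
        have "outl w = 0" unfolding outl_def e by simp
        moreover have "inl w \<le> real (L w) * (\<Sum>u\<in>{u. arc F u w}. fF F u w)"
          unfolding inl_def sum_distrib_left by (rule sum_mono) (rule flF_le(2)[OF ST yf ac])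
        moreover have "real (L w) * y' w = real (L w) * y w + real (L w) * (\<Sum>u\<in>{u. arc F u w}. fF F u w)"
          by (subst y'T[OF True]) (simp add: distrib_left)
        ultimately show ?thesis using main by linarith
      next
        case False
        then have nST: "w \<notin> S \<union> T" using nS by simp
        have "inl w \<le> outl w" unfolding inl_def outl_def by (rule in_le_out[OF ST yf ac nST])
        then show ?thesis using main y'N[OF nST] by simp
      qed
    qed
  qed

  have P4: "(\<Sum>u\<in>UNIV. x' u v) = 1" for v
  proof -
    have "(\<Sum>w\<in>UNIV. IN w v) = (\<Sum>w\<in>UNIV. OUT w v)"
      unfolding IN_def OUT_def
      using sum.swap_restrict[of UNIV UNIV "\<lambda>u w. x u v * flF L F u w / (real (L u) * y u)" "arc F"]
      by simp
    then show ?thesis unfolding x'raw using fe4[of v] by (simp add: sum.distrib sum_subtractf)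
  qed

  have P5: "0 \<le> y' u \<and> y' u \<le> 1" for u
  proof (cases "u \<in> S")
    case True then show ?thesis using y'S[OF True] outSle[OF True] outS0[of u] y1[of u] by simp
  next
    case nS: False
    show ?thesis
    proof (cases "u \<in> T")
      case True
      have "(\<Sum>w\<in>{w. arc F w u}. fF F w u) \<le> 1 - y u"
        using inT_eq[OF ST yf ac True] yf True unfolding y_flow_def by auto
      then show ?thesis using y'T[OF True] inc0[of u] y0[of u] by simp
    next
      case False then show ?thesis using y'N[of u] nS y0 y1 by simp
    qed
  qed

  have dsym: "gdist E u v = gdist E v u" for u v using gdist_sym[OF assms(1)] .
  have arcd: "arc F u w \<Longrightarrow> gdist E u w \<le> d" for u w
    unfolding d_def by (rule Sup_upper) blast
  have xd: "x u v \<noteq> 0 \<Longrightarrow> gdist E u v \<le> enat \<delta>" for u v using fe6 not_le by blast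
  have P6: "gdist E u v > enat \<delta> + d \<longrightarrow> x' u v = 0" for u v
  proof (rule impI, rule ccontr)
    assume g: "gdist E u v > enat \<delta> + d" and nz: "x' u v \<noteq> 0"
    from x'nz[OF nz] show False
    proof
      assume "x u v \<noteq> 0"
      then have "gdist E u v \<le> enat \<delta>" by (rule xd)
      then show False using g by (metis add_increasing2 leD zero_le)
    next
      assume "\<exists>w. arc F w u \<and> x w v \<noteq> 0"
      then obtain w where w: "arc F w u" "x w v \<noteq> 0" by blast
      have "gdist E u v \<le> gdist E u w + gdist E w v" by (rule gdist_tri)
      also have "\<dots> \<le> d + enat \<delta>" using arcd[OF w(1)] dsym[of u w] xd[OF w(2)] by (simp add: add_mono)
      finally show False using g by (simp add: add.commute)
    qed
  qed

  have feas: "feasible E L k (enat \<delta> + d) x' y'"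
    unfolding feasible_def using P1 P2 P3 P4 P5 P6 x'0 by blast

  have fin: "finite {i. \<exists>w. gdist E w v = enat i \<and> P w}" for v P
  proof -
    have "{i. \<exists>w. gdist E w v = enat i \<and> P w} \<subseteq> (\<lambda>w. the_enat (gdist E w v)) ` UNIV"
      by (auto simp: image_iff) (metis the_enat.simps)
    then show ?thesis by (rule finite_subset) simp
  qed
  have R1: "radius E x' v \<le> radius E x v" if "\<nexists>u. arc F u v" for v
    unfolding radius_def
  proof (rule Max_mono)
    show "{0} \<union> {i. \<exists>w. gdist E w v = enat i \<and> x' v w > 0} \<subseteq> {0} \<union> {i. \<exists>w. gdist E w v = enat i \<and> x v w > 0}"
    proof -
      have "x v w > 0" if "x' v w > 0" for w
      proof (rule ccontr)
        assume "\<not> x v w > 0" then have "x v w = 0" using x0[of v w] by simp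
        then show False using \<open>x' v w > 0\<close> noin[OF \<open>\<nexists>u. arc F u v\<close>] by simp
      qed
      then show ?thesis by blast
    qed
  qed (use fin in auto)
  have R2: "enat (radius E x' v) \<le> max (enat (radius E x v))
             (Sup {enat (radius E x a) + gdist E a v | a. arc F a v})" for v
  proof -
    let ?A = "{0} \<union> {i. \<exists>w. gdist E w v = enat i \<and> x' v w > 0}"
    have "radius E x' v \<in> ?A" unfolding radius_def by (rule Max_in) (use fin in auto)
    then show ?thesis
    proof
      assume "radius E x' v \<in> {0}" then show ?thesis by (simp add: zero_enat_def[symmetric])
    next
      assume "radius E x' v \<in> {i. \<exists>w. gdist E w v = enat i \<and> x' v w > 0}"
      then obtain w where w: "gdist E w v = enat (radius E x' v)" "x' v w > 0" by blast
      from x'nz[of v w] w(2) have "x v w \<noteq> 0 \<or> (\<exists>a. arc F a v \<and> x a w \<noteq> 0)" by simp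
      then show ?thesis
      proof
        assume "x v w \<noteq> 0"
        then have "x v w > 0" using x0[of v w] by simp
        then have "radius E x' v \<le> radius E x v" unfolding radius_def[of E x v]
          by (intro Max_ge) (use fin w(1) in auto)
        then show ?thesis by (simp add: le_max_iff_disj)
      next
        assume "\<exists>a. arc F a v \<and> x a w \<noteq> 0"
        then obtain a where a: "arc F a v" "x a w \<noteq> 0" by blast
        have "gdist E w a \<le> enat \<delta>" using xd[OF a(2)] dsym[of w a] by simp
        then obtain j where j: "gdist E w a = enat j" by (cases "gdist E w a") auto
        have "x a w > 0" using a(2) x0[of a w] by simp
        then have "j \<le> radius E x a" unfolding radius_def[of E x a]
          by (intro Max_ge) (use fin j in auto)
        have "enat (radius E x' v) = gdist E w v" using w(1) by simp
        also have "\<dots> \<le> gdist E w a + gdist E a v" by (rule gdist_tri)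
        also have "\<dots> \<le> enat (radius E x a) + gdist E a v" using j \<open>j \<le> radius E x a\<close> by (simp add: add_right_mono)
        also have "\<dots> \<le> Sup {enat (radius E x a) + gdist E a v | a. arc F a v}"
          by (rule Sup_upper) (use a(1) in blast)
        finally show ?thesis by (simp add: le_max_iff_disj)
      qed
    qed
  qed
  show ?thesis using feas R1 R2 y'N by blast
qed

end
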